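(* Let $G=(V,E)$ be a connected graph such that $(V,\mathcal{M}_{m^3_3}(G))$ is a convex geometry. Then $G$ is house-free, hole-free and domino-free.
   Context: All graphs are finite and simple. A path in $G$ is induced if it is an induced subgraph of $G$; its length is its number of edges. For vertices $u,v$, the $m^3$-interval $I_{m^3}[u,v]$ is the set of all vertices lying on some induced $u$–$v$ path of length at least $3$. A set $S\subseteq V$ is $m^3$-convex if $I_{m^3}[u,v]\subseteq S$ for all $u,v\in S$. For $U\subseteq V$ with $|U|\ge 2$, a minimal $U$-tree is a subgraph $T$ of $G$ containing $U$ such that $T$ is a tree and every vertex of $V(T)\setminus U$ is a cut-vertex of the subgraph of $G$ induced by $V(T)$; the monophonic interval $I_m(U)$ is the set of all vertices lying in some minimal $U$-tree. A set $S$ is $m_3$-convex if $I_m(U)\subseteq S$ for every $3$-element subset $U\subseteq S$. A set is $m^3_3$-convex if it is both $m^3$-convex and $m_3$-convex; $\mathcal{M}_{m^3_3}(G)$ denotes the family of $m^3_3$-convex sets. An alignment of a finite set $V$ is a family $\mathcal{M}$ of subsets of $V$ closed under intersection and containing $\emptyset$ and $V$; its members are called convex sets. The convex hull of $S\subseteq V$ is the smallest convex set containing $S$. For $X\in\mathcal{M}$, $x\in X$ is an extreme point of $X$ if $X\setminus\{x\}\in\mathcal{M}$. $(V,\mathcal{M})$ is a convex geometry if every convex set is the convex hull of its set of extreme points. A hole is an induced cycle of length at least $5$. The house is the graph obtained from a $4$-cycle $x_1x_2x_3x_4x_1$ by adding a vertex $y$ adjacent exactly to $x_1$ and $x_2$.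 The domino is the graph on six vertices consisting of a $6$-cycle $x_1x_2\dots x_6x_1$ together with the single chord $x_1x_4$. $G$ is $F$-free if it has no induced subgraph isomorphic to $F$ (hole-free: no induced cycle of length at least $5$). *)

theory Defs
  imports Main
begin

definition graph :: "'a set \<Rightarrow> 'a set set \<Rightarrow> bool" where
  "graph V E \<longleftrightarrow> finite V \<and>
     (\<forall>e\<in>E. \<exists>u v. e = {u, v} \<and> u \<noteq> v \<and> u \<in> V \<and> v \<in> V)"

definition adj :: "'a set set \<Rightarrow> 'a \<Rightarrow> 'a \<Rightarrow> bool" where
  "adj E u v \<longleftrightarrow> u \<noteq> v \<and> {u, v} \<in> E"

definition induced_edges :: "'a set set \<Rightarrow> 'a set \<Rightarrow> 'a set set" where
  "induced_edges E S = {e \<in> E. e \<subseteq> S}"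

definition adjrel :: "'a set \<Rightarrow> 'a set set \<Rightarrow> ('a \<times> 'a) set" where
  "adjrel W F = {(x, y). x \<in> W \<and> y \<in> W \<and> adj F x y}"

definition reach :: "'a set \<Rightarrow> 'a set set \<Rightarrow> 'a \<Rightarrow> 'a \<Rightarrow> bool" where
  "reach W F x y \<longleftrightarrow> x \<in> W \<and> y \<in> W \<and> (x, y) \<in> (adjrel W F)\<^sup>*"

definition connected_graph :: "'a set \<Rightarrow> 'a set set \<Rightarrow> bool" where
  "connected_graph W F \<longleftrightarrow> W \<noteq> {} \<and> (\<forall>x\<in>W. \<forall>y\<in>W. reach W F x y)"

definition is_cycle :: "'a set \<Rightarrow> 'a set set \<Rightarrow> 'a list \<Rightarrow> bool" where
  "is_cycle W F cs \<longleftrightarrow> length cs \<ge> 3 \<and> distinct cs \<and> set cs \<subseteq> W \<and>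
     (\<forall>i < length cs. adj F (cs ! i) (cs ! ((i + 1) mod length cs)))"

definition is_tree :: "'a set \<Rightarrow> 'a set set \<Rightarrow> bool" where
  "is_tree W F \<longleftrightarrow> connected_graph W F \<and> \<not> (\<exists>cs. is_cycle W F cs)"

text \<open>Cut-vertex of the graph (W,F): a vertex x separating two other vertices of the
  same component (i.e. its deletion increases the number of components).\<close>
definition cut_vertex :: "'a set \<Rightarrow> 'a set set \<Rightarrow> 'a \<Rightarrow> bool" where
  "cut_vertex W F x \<longleftrightarrow> x \<in> W \<and>
     (\<exists>y z. y \<in> W - {x} \<and> z \<in> W - {x} \<and> reach W F y z \<and>
            \<not> reach (W - {x}) (induced_edges F (W - {x})) y z)"

text \<open>An induced u-v path, given as its vertex list; its length is length xs - 1.\<close>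
definition induced_path :: "'a set \<Rightarrow> 'a set set \<Rightarrow> 'a list \<Rightarrow> 'a \<Rightarrow> 'a \<Rightarrow> bool" where
  "induced_path V E xs u v \<longleftrightarrow> xs \<noteq> [] \<and> hd xs = u \<and> last xs = v \<and>
     distinct xs \<and> set xs \<subseteq> V \<and>
     (\<forall>i j. i < length xs \<and> j < length xs \<longrightarrow>
        (adj E (xs ! i) (xs ! j) \<longleftrightarrow> (j = i + 1 \<or> i = j + 1)))"

definition m3_interval :: "'a set \<Rightarrow> 'a set set \<Rightarrow> 'a \<Rightarrow> 'a \<Rightarrow> 'a set" where
  "m3_interval V E u v =
     {x. \<exists>xs. induced_path V E xs u v \<and> length xs - 1 \<ge> 3 \<and> x \<in> set xs}"

definition m3_convex :: "'a set \<Rightarrow> 'a set set \<Rightarrow> 'a set \<Rightarrow> bool" where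
  "m3_convex V E S \<longleftrightarrow> (\<forall>u\<in>S. \<forall>v\<in>S. m3_interval V E u v \<subseteq> S)"

definition minimal_tree :: "'a set \<Rightarrow> 'a set set \<Rightarrow> 'a set \<Rightarrow> 'a set \<Rightarrow> 'a set set \<Rightarrow> bool" where
  "minimal_tree V E U VT ET \<longleftrightarrow>
     VT \<subseteq> V \<and> ET \<subseteq> E \<and> (\<forall>e\<in>ET. e \<subseteq> VT) \<and> U \<subseteq> VT \<and>
     is_tree VT ET \<and>
     (\<forall>x\<in>VT - U. cut_vertex VT (induced_edges E VT) x)"

definition mono_interval :: "'a set \<Rightarrow> 'a set set \<Rightarrow> 'a set \<Rightarrow> 'a set" where
  "mono_interval V E U = {x. \<exists>VT ET. minimal_tree V E U VT ET \<and> x \<in> VT}"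

definition m_3_convex :: "'a set \<Rightarrow> 'a set set \<Rightarrow> 'a set \<Rightarrow> bool" where
  "m_3_convex V E S \<longleftrightarrow> (\<forall>U. U \<subseteq> S \<and> card U = 3 \<longrightarrow> mono_interval V E U \<subseteq> S)"

definition m33_convex_sets :: "'a set \<Rightarrow> 'a set set \<Rightarrow> 'a set set" where
  "m33_convex_sets V E = {S. S \<subseteq> V \<and> m3_convex V E S \<and> m_3_convex V E S}"

definition alignment :: "'a set \<Rightarrow> 'a set set \<Rightarrow> bool" where
  "alignment V M \<longleftrightarrow> M \<subseteq> Pow V \<and> {} \<in> M \<and> V \<in> M \<and>
     (\<forall>A\<in>M. \<forall>B\<in>M. A \<inter> B \<in> M)"

definition convex_hull_in :: "'a set set \<Rightarrow> 'a set \<Rightarrow> 'a set" where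
  "convex_hull_in M S = \<Inter>{X \<in> M. S \<subseteq> X}"

definition extreme_points :: "'a set set \<Rightarrow> 'a set \<Rightarrow> 'a set" where
  "extreme_points M X = {x \<in> X. X - {x} \<in> M}"

definition convex_geometry :: "'a set \<Rightarrow> 'a set set \<Rightarrow> bool" where
  "convex_geometry V M \<longleftrightarrow> alignment V M \<and>
     (\<forall>X\<in>M. X = convex_hull_in M (extreme_points M X))"

definition contains_induced :: "'a set \<Rightarrow> 'a set set \<Rightarrow> nat set \<Rightarrow> nat set set \<Rightarrow> bool" where
  "contains_induced V E P PE \<longleftrightarrow>
     (\<exists>f. inj_on f P \<and> f ` P \<subseteq> V \<and>
        (\<forall>x\<in>P. \<forall>y\<in>P. adj PE x y \<longleftrightarrow> adj E (f x) (f y)))"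

text \<open>House: 4-cycle 0-1-2-3-0 plus vertex 4 adjacent exactly to 0 and 1.\<close>
definition house_edges :: "nat set set" where
  "house_edges = {{0,1},{1,2},{2,3},{3,0},{4,0},{4,1}}"

text \<open>Domino: 6-cycle 0-1-2-3-4-5-0 plus chord 0-3.\<close>
definition domino_edges :: "nat set set" where
  "domino_edges = {{0,1},{1,2},{2,3},{3,4},{4,5},{5,0},{0,3}}"

definition cycle_edges :: "nat \<Rightarrow> nat set set" where
  "cycle_edges n = {{i, (i + 1) mod n} | i. i < n}"

definition house_free :: "'a set \<Rightarrow> 'a set set \<Rightarrow> bool" where
  "house_free V E \<longleftrightarrow> \<not> contains_induced V E {0..<5} house_edges"

definition domino_free :: "'a set \<Rightarrow> 'a set set \<Rightarrow> bool" where
  "domino_free V E \<longleftrightarrow> \<not> contains_induced V E {0..<6} domino_edges"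

definition hole_free :: "'a set \<Rightarrow> 'a set set \<Rightarrow> bool" where
  "hole_free V E \<longleftrightarrow> (\<forall>n\<ge>5. \<not> contains_induced V E {0..<n} (cycle_edges n))"

end

theory Submission
  imports Defs
begin


lemma adj_sym: "adj E u v = adj E v u"
  by (auto simp: adj_def insert_commute)

lemma seg_interval:
  assumes "xs \<noteq> []" "distinct xs" "set xs \<subseteq> V"
    "\<forall>i j. i < length xs \<and> j < length xs \<longrightarrow> (adj E (xs!i) (xs!j) \<longleftrightarrow> (j = i+1 \<or> i = j+1))"
    "length xs \<ge> 4"
  shows "set xs \<subseteq> m3_interval V E (hd xs) (last xs)"
  unfolding m3_interval_def induced_path_def using assms by auto

lemma seg_convex:
  assumes "m3_convex V E X" "xs \<noteq> []" "distinct xs" "set xs \<subseteq> V"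
    "\<forall>i j. i < length xs \<and> j < length xs \<longrightarrow> (adj E (xs!i) (xs!j) \<longleftrightarrow> (j = i+1 \<or> i = j+1))"
    "length xs \<ge> 4" "hd xs \<in> X" "last xs \<in> X"
  shows "set xs \<subseteq> X"
  using seg_interval[OF assms(2-6)] assms(1,7,8) unfolding m3_convex_def by blast

lemma P4_convex:
  assumes "m3_convex V E X" "a \<in> X" "d \<in> X" "a \<in> V" "b \<in> V" "c \<in> V" "d \<in> V"
    "distinct [a,b,c,d]" "adj E a b" "adj E b c" "adj E c d"
    "\<not> adj E a c" "\<not> adj E a d" "\<not> adj E b d"
  shows "b \<in> X \<and> c \<in> X"
proof -
  have "\<forall>i j. i < length [a,b,c,d] \<and> j < length [a,b,c,d] \<longrightarrow>
     (adj E ([a,b,c,d]!i) ([a,b,c,d]!j) \<longleftrightarrow> (j = i+1 \<or> i = j+1))"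
  proof (intro allI impI)
    fix i j assume h: "i < length [a,b,c,d] \<and> j < length [a,b,c,d]"
    have ai: "i = 0 \<or> i = 1 \<or> i = 2 \<or> i = 3" "j = 0 \<or> j = 1 \<or> j = 2 \<or> j = 3" using h by auto
    have irr: "\<And>x. \<not> adj E x x" by (simp add: adj_def)
    have s: "adj E b a" "adj E c b" "adj E d c" "\<not> adj E c a" "\<not> adj E d a" "\<not> adj E d b"
      using assms(9-14) adj_sym by metis+
    from ai show "(adj E ([a,b,c,d]!i) ([a,b,c,d]!j) \<longleftrightarrow> (j = i+1 \<or> i = j+1))"
      apply (elim disjE)
      using assms(9-14) s irr by simp_all
  qed
  from seg_convex[OF assms(1) _ assms(8) _ this] assms show ?thesis by auto
qed

lemma singleton_m33:
  assumes "v \<in> V" shows "{v} \<in> m33_convex_sets V E"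
proof -
  have "m3_interval V E v v = {}"
  proof (rule ccontr)
    assume "m3_interval V E v v \<noteq> {}"
    then obtain xs where xs: "induced_path V E xs v v" "length xs - 1 \<ge> 3"
      unfolding m3_interval_def by auto
    then have "xs \<noteq> []" "distinct xs" "hd xs = v" "last xs = v" unfolding induced_path_def by auto
    then have "xs ! 0 = xs ! (length xs - 1)" by (simp add: hd_conv_nth last_conv_nth)
    with \<open>distinct xs\<close> \<open>xs \<noteq> []\<close> have "0 = length xs - 1" by (simp add: nth_eq_iff_index_eq)
    with xs(2) show False by simp
  qed
  then have m3: "m3_convex V E {v}" unfolding m3_convex_def by simp
  have m_3: "m_3_convex V E {v}" unfolding m_3_convex_def
  proof (intro allI impI)
    fix U :: "'a set" assume U: "U \<subseteq> {v} \<and> card U = 3"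
    then have "card U \<le> card {v}" by (intro card_mono) auto
    with U show "mono_interval V E U \<subseteq> {v}" by simp
  qed
  show ?thesis using assms m3 m_3 unfolding m33_convex_sets_def by simp
qed

lemma cg_contra:
  assumes cg: "convex_geometry V (m33_convex_sets V E)"
    and AV: "A \<subseteq> V"
    and hAB: "\<And>X. m3_convex V E X \<Longrightarrow> A \<subseteq> X \<Longrightarrow> B \<subseteq> X"
    and hBA: "\<And>X. m3_convex V E X \<Longrightarrow> B \<subseteq> X \<Longrightarrow> A \<subseteq> X"
    and v: "v \<in> V" and AB: "A \<inter> B \<subseteq> {v}" and Av: "\<not> A \<subseteq> {v}"
  shows False
proof -
  let ?M = "m33_convex_sets V E"
  define H where "H = convex_hull_in ?M A"
  have VM: "V \<in> ?M" using cg unfolding convex_geometry_def alignment_def by auto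
  have Hmin: "H \<subseteq> X" if "X \<in> ?M" "A \<subseteq> X" for X
    using that unfolding H_def convex_hull_in_def by auto
  have AH: "A \<subseteq> H" unfolding H_def convex_hull_in_def by auto
  have HV: "H \<subseteq> V" using Hmin[OF VM AV] .
  have m3: "m3_convex V E H"
    unfolding m3_convex_def
  proof (intro ballI subsetI)
    fix u w x assume u: "u \<in> H" and w: "w \<in> H" and x: "x \<in> m3_interval V E u w"
    show "x \<in> H" unfolding H_def convex_hull_in_def
    proof
      fix X assume X: "X \<in> {X \<in> ?M. A \<subseteq> X}"
      then have "u \<in> X" "w \<in> X" using u w Hmin by auto
      with X x show "x \<in> X" unfolding m33_convex_sets_def m3_convex_def by auto
    qed
  qed
  have m_3: "m_3_convex V E H"
    unfolding m_3_convex_def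
  proof (intro allI impI subsetI)
    fix U x assume U: "U \<subseteq> H \<and> card U = 3" and x: "x \<in> mono_interval V E U"
    show "x \<in> H" unfolding H_def convex_hull_in_def
    proof
      fix X assume X: "X \<in> {X \<in> ?M. A \<subseteq> X}"
      then have "U \<subseteq> X" using U Hmin by blast
      with X x U show "x \<in> X" unfolding m33_convex_sets_def m_3_convex_def by auto
    qed
  qed
  have HM: "H \<in> ?M" using HV m3 m_3 unfolding m33_convex_sets_def by auto
  have BH: "B \<subseteq> H" using hAB[OF m3 AH] .
  have ext: "extreme_points ?M H \<subseteq> {v}"
  proof
    fix x assume "x \<in> extreme_points ?M H"
    then have xH: "x \<in> H" and HxM: "H - {x} \<in> ?M" unfolding extreme_points_def by auto
    have "x \<in> A"
    proof (rule ccontr)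
      assume "x \<notin> A"
      then have "A \<subseteq> H - {x}" using AH by auto
      then have "H \<subseteq> H - {x}" using Hmin HxM by blast
      with xH show False by auto
    qed
    moreover have "x \<in> B"
    proof (rule ccontr)
      assume "x \<notin> B"
      then have "B \<subseteq> H - {x}" using BH by auto
      moreover have "m3_convex V E (H - {x})" using HxM unfolding m33_convex_sets_def by auto
      ultimately have "A \<subseteq> H - {x}" using hBA by blast
      then have "H \<subseteq> H - {x}" using Hmin HxM by blast
      with xH show False by auto
    qed
    ultimately show "x \<in> {v}" using AB by auto
  qed
  have "H = convex_hull_in ?M (extreme_points ?M H)"
    using cg HM unfolding convex_geometry_def by auto
  also have "\<dots> \<subseteq> {v}" using singleton_m33[OF v] ext unfolding convex_hull_in_def by auto
  finally show False using AH Av by auto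
qed



lemma P4_pat:
  assumes inj: "inj_on f P" and fP: "f ` P \<subseteq> V"
    and ad: "\<forall>x\<in>P. \<forall>y\<in>P. adj PE x y \<longleftrightarrow> adj E (f x) (f y)"
    and X: "m3_convex V E X" "f a \<in> X" "f d \<in> X"
    and P: "a \<in> P" "b \<in> P" "c \<in> P" "d \<in> P"
    and dist: "distinct [a,b,c,d]"
    and e: "adj PE a b" "adj PE b c" "adj PE c d"
    and ne: "\<not> adj PE a c" "\<not> adj PE a d" "\<not> adj PE b d"
  shows "f b \<in> X \<and> f c \<in> X"
proof (rule P4_convex[OF X _ _ _ _ ])
  show "distinct [f a, f b, f c, f d]" using dist P inj by (auto simp: inj_on_eq_iff)
qed (use fP P ad e ne in auto)

lemma house_adj: "adj house_edges 4 0" "adj house_edges 0 3" "adj house_edges 3 2"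
  "\<not> adj house_edges 4 3" "\<not> adj house_edges 4 2" "\<not> adj house_edges 0 2"
  "adj house_edges 4 1" "adj house_edges 1 2" "adj house_edges 2 3" "\<not> adj house_edges 1 3"
  by (auto simp: adj_def house_edges_def doubleton_eq_iff)

lemma domino_adj:
  "adj domino_edges 1 2" "adj domino_edges 2 3" "adj domino_edges 3 4"
  "\<not> adj domino_edges 1 3" "\<not> adj domino_edges 1 4" "\<not> adj domino_edges 2 4"
  "adj domino_edges 4 5" "adj domino_edges 5 0" "adj domino_edges 0 1"
  "\<not> adj domino_edges 4 0" "\<not> adj domino_edges 5 1"
  "\<not> adj domino_edges 2 5" "\<not> adj domino_edges 3 5"
  "adj domino_edges 2 1" "adj domino_edges 1 0" "adj domino_edges 0 5"
  "\<not> adj domino_edges 2 0" "\<not> adj domino_edges 1 5" "\<not> adj domino_edges 4 1"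
  by (auto simp: adj_def domino_edges_def doubleton_eq_iff)

lemma house:
  assumes cg: "convex_geometry V (m33_convex_sets V E)"
  shows "house_free V E"
  unfolding house_free_def contains_induced_def
proof
  assume "\<exists>f. inj_on f {0..<5::nat} \<and> f ` {0..<5} \<subseteq> V \<and>
    (\<forall>x\<in>{0..<5}. \<forall>y\<in>{0..<5}. adj house_edges x y = adj E (f x) (f y))"
  then obtain f where inj: "inj_on f {0..<5::nat}" and fP: "f ` {0..<5} \<subseteq> V"
    and ad: "\<forall>x\<in>{0..<5}. \<forall>y\<in>{0..<5}. adj house_edges x y = adj E (f x) (f y)" by blast
  note P4 = P4_pat[OF inj fP ad]
  have d: "f 2 \<noteq> f 3" "f 2 \<noteq> f 4" using inj by (auto simp: inj_on_eq_iff)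
  show False
  proof (rule cg_contra[OF cg, of "{f 4, f 2}" "{f 4, f 3}" "f 4"])
    show "{f 4, f 2} \<subseteq> V" using fP by auto
    show "{f 4, f 3} \<subseteq> X" if "m3_convex V E X" "{f 4, f 2} \<subseteq> X" for X
      using P4[of X 4 2 0 3] that house_adj by auto
    show "{f 4, f 2} \<subseteq> X" if "m3_convex V E X" "{f 4, f 3} \<subseteq> X" for X
      using P4[of X 4 3 1 2] that house_adj by auto
    show "f 4 \<in> V" using fP by auto
    show "{f 4, f 2} \<inter> {f 4, f 3} \<subseteq> {f 4}" using d by blast
    show "\<not> {f 4, f 2} \<subseteq> {f 4}" using d by blast
  qed
qed

lemma domino:
  assumes cg: "convex_geometry V (m33_convex_sets V E)"
  shows "domino_free V E"
  unfolding domino_free_def contains_induced_def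
proof
  assume "\<exists>f. inj_on f {0..<6::nat} \<and> f ` {0..<6} \<subseteq> V \<and>
    (\<forall>x\<in>{0..<6}. \<forall>y\<in>{0..<6}. adj domino_edges x y = adj E (f x) (f y))"
  then obtain f where inj: "inj_on f {0..<6::nat}" and fP: "f ` {0..<6} \<subseteq> V"
    and ad: "\<forall>x\<in>{0..<6}. \<forall>y\<in>{0..<6}. adj domino_edges x y = adj E (f x) (f y)" by blast
  note P4 = P4_pat[OF inj fP ad]
  have d: "f 1 \<noteq> f 2" "f 1 \<noteq> f 5" "f 4 \<noteq> f 2" "f 4 \<noteq> f 5" "f 4 \<noteq> f 1"
    using inj by (auto simp: inj_on_eq_iff)
  show False
  proof (rule cg_contra[OF cg, of "{f 1, f 4}" "{f 2, f 5}" "f 1"])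
    show "{f 1, f 4} \<subseteq> V" using fP by auto
    show "{f 2, f 5} \<subseteq> X" if "m3_convex V E X" "{f 1, f 4} \<subseteq> X" for X
    proof -
      have "f 2 \<in> X" using P4[of X 1 4 2 3] that domino_adj by simp
      moreover have "f 5 \<in> X" using P4[of X 4 1 5 0] that domino_adj by simp
      ultimately show ?thesis by simp
    qed
    show "{f 1, f 4} \<subseteq> X" if "m3_convex V E X" "{f 2, f 5} \<subseteq> X" for X
    proof -
      have "f 4 \<in> X" using P4[of X 2 5 3 4] that domino_adj by simp
      moreover have "f 1 \<in> X" using P4[of X 2 5 1 0] that domino_adj by simp
      ultimately show ?thesis by simp
    qed
    show "f 1 \<in> V" using fP by auto
    show "{f 1, f 4} \<inter> {f 2, f 5} \<subseteq> {f 1}" using d by blast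
    show "\<not> {f 1, f 4} \<subseteq> {f 1}" using d by blast
  qed
qed



lemma cyc_adj:
  assumes n: "n \<ge> 3" and i: "i < n" and j: "j < n"
  shows "adj (cycle_edges n) i j \<longleftrightarrow>
    (j = i+1 \<or> i = j+1 \<or> (i = 0 \<and> j = n-1) \<or> (j = 0 \<and> i = n-1))"
proof
  assume "adj (cycle_edges n) i j"
  then obtain k where k: "k < n" "{i, j} = {k, (k+1) mod n}"
    unfolding adj_def cycle_edges_def by auto
  show "j = i+1 \<or> i = j+1 \<or> (i = 0 \<and> j = n-1) \<or> (j = 0 \<and> i = n-1)"
  proof (cases "k + 1 < n")
    case True
    then have "(k+1) mod n = k+1" by simp
    with k show ?thesis by (auto simp: doubleton_eq_iff)
  next
    case False
    then have "k = n - 1" using k by simp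
    then have "(k+1) mod n = 0" using n by simp
    with k \<open>k = n-1\<close> show ?thesis by (auto simp: doubleton_eq_iff)
  qed
next
  assume h: "j = i+1 \<or> i = j+1 \<or> (i = 0 \<and> j = n-1) \<or> (j = 0 \<and> i = n-1)"
  have ne: "i \<noteq> j" using h n by auto
  have "{i, j} \<in> cycle_edges n"
  proof -
    from h consider "j = i+1" | "i = j+1" | "i = 0 \<and> j = n-1" | "j = 0 \<and> i = n-1" by blast
    then show ?thesis
    proof cases
      case 1
      then have "{i,j} = {i, (i+1) mod n}" using j by simp
      then show ?thesis using i unfolding cycle_edges_def by blast
    next
      case 2
      then have "{i,j} = {j, (j+1) mod n}" using i by (simp add: insert_commute)
      then show ?thesis using j unfolding cycle_edges_def by blast
    next
      case 3
      then have "{i,j} = {n-1, (n-1+1) mod n}" using n by (simp add: insert_commute)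
      moreover have "n - 1 < n" using n by simp
      ultimately show ?thesis unfolding cycle_edges_def by blast
    next
      case 4
      then have "{i,j} = {n-1, (n-1+1) mod n}" using n by simp
      moreover have "n - 1 < n" using n by simp
      ultimately show ?thesis unfolding cycle_edges_def by blast
    qed
  qed
  with ne show "adj (cycle_edges n) i j" unfolding adj_def by simp
qed

lemma seg_hole:
  assumes n: "n \<ge> 5" and inj: "inj_on f {0..<n}" and fP: "f ` {0..<n} \<subseteq> V"
    and ad: "\<forall>i<n. \<forall>j<n. adj E (f i) (f j) \<longleftrightarrow>
      (j = i+1 \<or> i = j+1 \<or> (i = 0 \<and> j = n-1) \<or> (j = 0 \<and> i = n-1))"
    and X: "m3_convex V E X"
    and am: "a + m \<le> n" "m \<ge> 4" "a \<ge> 1 \<or> a + m \<le> n - 1"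
    and ends: "f a \<in> X" "f (a + m - 1) \<in> X"
  shows "set (map f [a..<a+m]) \<subseteq> X"
proof (rule seg_convex[OF X])
  let ?xs = "map f [a..<a+m]"
  show "?xs \<noteq> []" using am by simp
  have "inj_on f {a..<a+m}" by (rule inj_on_subset[OF inj]) (use am in auto)
  then show "distinct ?xs" by (simp add: distinct_map)
  show "set ?xs \<subseteq> V" using fP am by auto
  show "length ?xs \<ge> 4" using am by simp
  show "hd ?xs \<in> X" using ends am by (simp add: hd_map)
  have "last ?xs = f (a + m - 1)" using am by (simp add: last_map)
  then show "last ?xs \<in> X" using ends by simp
  show "\<forall>i j. i < length ?xs \<and> j < length ?xs \<longrightarrow>
     (adj E (?xs!i) (?xs!j) \<longleftrightarrow> (j = i+1 \<or> i = j+1))"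
  proof (intro allI impI)
    fix i j assume h: "i < length ?xs \<and> j < length ?xs"
    then have "?xs ! i = f (a+i)" "?xs ! j = f (a+j)" by auto
    moreover have "adj E (f (a+i)) (f (a+j)) \<longleftrightarrow> (j = i+1 \<or> i = j+1)"
      using ad h am n by auto
    ultimately show "(adj E (?xs!i) (?xs!j) \<longleftrightarrow> (j = i+1 \<or> i = j+1))" by simp
  qed
qed

lemma hole:
  assumes cg: "convex_geometry V (m33_convex_sets V E)"
  shows "hole_free V E"
  unfolding hole_free_def
proof (intro allI impI)
  fix n :: nat assume n: "n \<ge> 5"
  show "\<not> contains_induced V E {0..<n} (cycle_edges n)"
    unfolding contains_induced_def
  proof
    assume "\<exists>f. inj_on f {0..<n} \<and> f ` {0..<n} \<subseteq> V \<and>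
      (\<forall>x\<in>{0..<n}. \<forall>y\<in>{0..<n}. adj (cycle_edges n) x y = adj E (f x) (f y))"
    then obtain f where inj: "inj_on f {0..<n}" and fP: "f ` {0..<n} \<subseteq> V"
      and ad0: "\<forall>x\<in>{0..<n}. \<forall>y\<in>{0..<n}. adj (cycle_edges n) x y = adj E (f x) (f y)" by blast
    have ad: "adj E (f i) (f j) \<longleftrightarrow>
      (j = i+1 \<or> i = j+1 \<or> (i = 0 \<and> j = n-1) \<or> (j = 0 \<and> i = n-1))"
      if "i < n" "j < n" for i j
      using ad0 that cyc_adj[of n i j] n by auto
    have fne: "f i \<noteq> f j" if "i < n" "j < n" "i \<noteq> j" for i j
      using inj that by (auto simp: inj_on_eq_iff)
    have fV: "f i \<in> V" if "i < n" for i using fP that by auto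
    have adall: "\<forall>i<n. \<forall>j<n. adj E (f i) (f j) \<longleftrightarrow>
      (j = i+1 \<or> i = j+1 \<or> (i = 0 \<and> j = n-1) \<or> (j = 0 \<and> i = n-1))" using ad by blast
    note seg = seg_hole[OF n inj fP adall]
    show False
    proof (rule cg_contra[OF cg, of "{f 0, f (n-2)}" "{f 1, f (n-1)}" "f 0"])
      show "{f 0, f (n-2)} \<subseteq> V" using fV n by auto
      show "f 0 \<in> V" using fV n by auto
      show "{f 0, f (n-2)} \<inter> {f 1, f (n-1)} \<subseteq> {f 0}"
        using fne[of 0 1] fne[of 0 "n-1"] fne[of "n-2" 1] fne[of "n-2" "n-1"] n by auto
      show "\<not> {f 0, f (n-2)} \<subseteq> {f 0}" using fne[of 0 "n-2"] n by auto
      show "{f 1, f (n-1)} \<subseteq> X" if X: "m3_convex V E X" "{f 0, f (n-2)} \<subseteq> X" for X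
      proof -
        have "set (map f [0..<0+(n-1)]) \<subseteq> X"
          by (rule seg[OF X(1)]) (use n X(2) in \<open>auto simp: numeral_eq_Suc\<close>)
        then have s: "f k \<in> X" if "k < n - 1" for k using that by auto
        have "f (n-2) \<in> X \<and> f (n-1) \<in> X"
        proof (rule P4_convex[OF X(1) s[of "n-3"] s[of 0]])
          show "distinct [f (n-3), f (n-2), f (n-1), f 0]"
            using fne[of "n-3" "n-2"] fne[of "n-3" "n-1"] fne[of "n-3" 0]
              fne[of "n-2" "n-1"] fne[of "n-2" 0] fne[of "n-1" 0] n by auto
        qed (use n fV ad in auto)
        then show ?thesis using s[of 1] n by auto
      qed
      show "{f 0, f (n-2)} \<subseteq> X" if X: "m3_convex V E X" "{f 1, f (n-1)} \<subseteq> X" for X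
      proof -
        have "set (map f [1..<1+(n-1)]) \<subseteq> X"
          by (rule seg[OF X(1)]) (use n X(2) in auto)
        then have s: "f k \<in> X" if "1 \<le> k" "k < n" for k using that by auto
        have "f (n-1) \<in> X \<and> f 0 \<in> X"
        proof (rule P4_convex[OF X(1) s[of "n-2"] s[of 1]])
          show "distinct [f (n-2), f (n-1), f 0, f 1]"
            using fne[of "n-2" "n-1"] fne[of "n-2" 0] fne[of "n-2" 1]
              fne[of "n-1" 0] fne[of "n-1" 1] fne[of 0 1] n by auto
        qed (use n fV ad in auto)
        then show ?thesis using s[of "n-2"] n by auto
      qed
    qed
  qed
qed


theorem mainTheorem4:
  fixes V :: "'a set" and E :: "'a set set"
  assumes "graph V E"
    and "connected_graph V E"
    and "convex_geometry V (m33_convex_sets V E)"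
  shows "house_free V E \<and> hole_free V E \<and> domino_free V E"
  using house[OF assms(3)] hole[OF assms(3)] domino[OF assms(3)] by blast

end
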